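(* Let $M,M'\in S_2^+$, let $(e,f)$ be an $M$-reduced basis and $(e',f')$ an $M'$-reduced basis of $\mathbb Z^2$. Let $\tau\ge1$ satisfy $\tau^{-2}M\le M'\le\tau^2M$ in the sense of symmetric matrices. Assume either (i) $2\mu(M)<\lambda_1(M)^2$ and $\tau=1$; or (ii) $4\mu(M)\le\lambda_1(M)^2$ and $\tau^4\le1+\tfrac13\kappa(M)^{-2}$. Then $\{e',f'\}\subset\{e,f,-e,-f\}$.
   Context: $\|e\|_M:=\sqrt{\langle e,Me\rangle}$, and $\kappa(M):=\sqrt{\|M\|\,\|M^{-1}\|}$ (operator norms). An $M$-reduced basis of $\mathbb Z^2$ is a basis $(e_1,e_2)$ (pair in $\mathbb Z^2$ with determinant $\pm1$) such that $\|e_1\|_M=\min\{\|e\|_M:e\in\mathbb Z^2\setminus\{0\}\}$ and $\|e_2\|_M=\min\{\|e\|_M:e\in\mathbb Z^2\setminus e_1\mathbb Z\}$. The Minkowski minima are $\lambda_1(M):=\|e_1\|_M$ and $\lambda_2(M):=\|e_2\|_M$; they are independent of the choice. Also $\mu(M):=|\langle e_1,Me_2\rangle|=\sqrt{\lambda_1(M)^2\lambda_2(M)^2-\det M}$, which is likewise independent of the choice. *)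

theory Defs
  imports "HOL-Analysis.Analysis"
begin

definition rv :: "int^2 \<Rightarrow> real^2" where
  "rv e = (\<chi> i. real_of_int (e $ i))"

definition spd2 :: "real^2^2 \<Rightarrow> bool" where
  "spd2 M \<longleftrightarrow> transpose M = M \<and> (\<forall>x. x \<noteq> 0 \<longrightarrow> x \<bullet> (M *v x) > 0)"

definition normM :: "real^2^2 \<Rightarrow> int^2 \<Rightarrow> real" where
  "normM M e = sqrt (rv e \<bullet> (M *v rv e))"

definition is_basis2 :: "int^2 \<Rightarrow> int^2 \<Rightarrow> bool" where
  "is_basis2 e f \<longleftrightarrow> \<bar>e $ 1 * f $ 2 - e $ 2 * f $ 1\<bar> = 1"

definition reduced_basis :: "real^2^2 \<Rightarrow> int^2 \<Rightarrow> int^2 \<Rightarrow> bool" where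
  "reduced_basis M e1 e2 \<longleftrightarrow> is_basis2 e1 e2
     \<and> (\<forall>v. v \<noteq> 0 \<longrightarrow> normM M e1 \<le> normM M v)
     \<and> (\<forall>v. v \<notin> range (\<lambda>k::int. k *s e1) \<longrightarrow> normM M e2 \<le> normM M v)"

text \<open>A chosen reduced basis; the quantities below are independent of the choice.\<close>
definition some_rb :: "real^2^2 \<Rightarrow> (int^2) \<times> (int^2)" where
  "some_rb M = (SOME p. reduced_basis M (fst p) (snd p))"

definition lambda1 :: "real^2^2 \<Rightarrow> real" where
  "lambda1 M = normM M (fst (some_rb M))"

definition lambda2 :: "real^2^2 \<Rightarrow> real" where
  "lambda2 M = normM M (snd (some_rb M))"

definition mu :: "real^2^2 \<Rightarrow> real" where
  "mu M = \<bar>rv (fst (some_rb M)) \<bullet> (M *v rv (snd (some_rb M)))\<bar>"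

definition kappa :: "real^2^2 \<Rightarrow> real" where
  "kappa M = sqrt (onorm (\<lambda>x. M *v x) * onorm (\<lambda>x. matrix_inv M *v x))"

definition loewner_le :: "real^2^2 \<Rightarrow> real^2^2 \<Rightarrow> bool" where
  "loewner_le A B \<longleftrightarrow> (\<forall>x. x \<bullet> (A *v x) \<le> x \<bullet> (B *v x))"

end

theory Submission
  imports Defs
begin


definition Bf :: "real^2^2 \<Rightarrow> int^2 \<Rightarrow> int^2 \<Rightarrow> real" where
  "Bf M u v = rv u \<bullet> (M *v rv v)"

lemma sym12: "transpose M = M \<Longrightarrow> M$2$1 = M$1$(2::2)"
proof -
  assume a: "transpose M = M"
  have "transpose M $ 1 $ 2 = M $ 2 $ 1" by (simp add: transpose_def)
  thus ?thesis using a by simp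
qed

lemma Bf_expand: "Bf M u w = M$1$1*u$1*w$1 + M$1$2*u$1*w$2 + M$2$1*u$2*w$1 + M$2$2*u$2*w$2"
  by (simp add: Bf_def rv_def inner_vec_def matrix_vector_mult_def sum_2 algebra_simps)

lemma Br_expand: "(u::real^2) \<bullet> ((M::real^2^2) *v (w::real^2)) = M$1$1*u$1*w$1 + M$1$2*u$1*w$2 + M$2$1*u$2*w$1 + M$2$2*u$2*w$2"
  by (simp add: inner_vec_def matrix_vector_mult_def sum_2 algebra_simps)

lemma Br_scale: "(u::real^2) \<bullet> ((s *\<^sub>R M) *v u) = s * (u \<bullet> (M *v u))"
  by (simp add: inner_vec_def matrix_vector_mult_def sum_2 algebra_simps)

lemma P1: "(m11::real)*(x*e1+y*f1)*(x*e1+y*f1) + m12*(x*e1+y*f1)*(x*e2+y*f2) + m12*(x*e2+y*f2)*(x*e1+y*f1) + m22*(x*e2+y*f2)*(x*e2+y*f2)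
  = x^2*(m11*e1*e1 + m12*e1*e2 + m12*e2*e1 + m22*e2*e2) + 2*x*y*(m11*e1*f1 + m12*e1*f2 + m12*e2*f1 + m22*e2*f2) + y^2*(m11*f1*f1 + m12*f1*f2 + m12*f2*f1 + m22*f2*f2)"
  by (simp add: power2_eq_square algebra_simps)

lemma P2: "((m11::real)*e1*e1 + m12*e1*e2 + m12*e2*e1 + m22*e2*e2) * (m11*f1*f1 + m12*f1*f2 + m12*f2*f1 + m22*f2*f2)
   - (m11*e1*f1 + m12*e1*f2 + m12*e2*f1 + m22*e2*f2)^2
  = (e1*f2-e2*f1)^2*(m11*m22-m12*m12)"
  by (simp add: power2_eq_square algebra_simps)

lemma Bf_quad:
  assumes s: "M$2$1 = M$1$2"
  shows "Bf M (x *s e + y *s f) (x *s e + y *s f) = x^2 * Bf M e e + 2*x*y*Bf M e f + y^2 * Bf M f f"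
proof -
  have c: "\<And>i. real_of_int ((x *s e + y *s f)$i) = real_of_int x * real_of_int (e$i) + real_of_int y * real_of_int (f$i)"
    by simp
  show ?thesis unfolding Bf_expand s c by (rule P1)
qed

lemma gram:
  assumes s: "M$2$1 = M$1$2"
  shows "Bf M e e * Bf M f f - (Bf M e f)^2 = (real_of_int (e$1)*real_of_int (f$2) - real_of_int (e$2)*real_of_int (f$1))^2 * (M$1$1*M$2$2 - M$1$2*M$1$2)"
  unfolding Bf_expand s by (rule P2)

lemma Br_sym: "(M::real^2^2)$2$1 = M$1$2 \<Longrightarrow> (u::real^2) \<bullet> (M *v w) = w \<bullet> (M *v u)"
  unfolding Br_expand by (simp add: algebra_simps)

lemma P3: "(m11::real)*(u1+t*w1)*(u1+t*w1) + m12*(u1+t*w1)*(u2+t*w2) + m12*(u2+t*w2)*(u1+t*w1) + m22*(u2+t*w2)*(u2+t*w2)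
  = (m11*u1*u1 + m12*u1*u2 + m12*u2*u1 + m22*u2*u2) + 2*t*(m11*u1*w1 + m12*u1*w2 + m12*u2*w1 + m22*u2*w2) + t^2*(m11*w1*w1 + m12*w1*w2 + m12*w2*w1 + m22*w2*w2)"
  by (simp add: power2_eq_square algebra_simps)

lemma Br_quad:
  fixes u w :: "real^2" and M :: "real^2^2"
  assumes s: "M$2$1 = M$1$2"
  shows "(u + t *\<^sub>R w) \<bullet> (M *v (u + t *\<^sub>R w)) = u \<bullet> (M *v u) + 2*t*(u \<bullet> (M *v w)) + t^2*(w \<bullet> (M *v w))"
proof -
  have c: "\<And>i. (u + t *\<^sub>R w)$i = u$i + t * w$i" by simp
  show ?thesis unfolding Br_expand s c by (rule P3)
qed

lemma disc:
  fixes A B C :: real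
  assumes "\<And>t. 0 \<le> A + 2*t*B + t^2*C" and "C > 0"
  shows "B^2 \<le> A*C"
proof -
  have "0 \<le> A + 2*(-B/C)*B + (-B/C)^2*C" by (rule assms(1))
  also have "\<dots> = A - B^2/C" using assms(2) by (simp add: power2_eq_square field_simps)
  finally have "B^2/C \<le> A" by simp
  thus ?thesis using assms(2) by (simp add: field_simps)
qed

lemma CS:
  fixes M :: "real^2^2"
  assumes s: "M$2$1 = M$1$2" and pd: "\<And>x. x \<noteq> 0 \<Longrightarrow> x \<bullet> (M *v x) > 0" and w: "w \<noteq> 0"
  shows "(u \<bullet> (M *v w))^2 \<le> (u \<bullet> (M *v u)) * (w \<bullet> (M *v (w::real^2)))"
proof (rule disc)
  fix t :: real
  have "0 \<le> (u + t *\<^sub>R w) \<bullet> (M *v (u + t *\<^sub>R w))"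
    using pd[of "u + t *\<^sub>R w"] by (cases "u + t *\<^sub>R w = 0") auto
  thus "0 \<le> u \<bullet> (M *v u) + 2*t*(u \<bullet> (M *v w)) + t^2*(w \<bullet> (M *v w))"
    using Br_quad[OF s] by simp
  show "w \<bullet> (M *v w) > 0" using pd w by simp
qed



lemma norm2: "norm (x::real^2) = sqrt ((x$1)^2 + (x$2)^2)"
  by (simp add: norm_vec_def L2_set_def sum_2)

lemma rv_eq0: "rv v = 0 \<longleftrightarrow> v = 0"
  by (simp add: rv_def vec_eq_iff)


lemma basis_props:
  assumes b: "is_basis2 u v"
  shows "u \<noteq> 0" "v \<noteq> 0" "u \<noteq> k *s v" "v \<noteq> k *s u" "u \<noteq> k *s (-v)" "v \<noteq> k *s (-u)"
proof -
  show "u \<noteq> 0" using b by (auto simp: is_basis2_def)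
  show "v \<noteq> 0" using b by (auto simp: is_basis2_def)
  show "u \<noteq> k *s v"
  proof
    assume "u = k *s v" thus False using b by (simp add: is_basis2_def)
  qed
  show "v \<noteq> k *s u"
  proof
    assume "v = k *s u" thus False using b by (simp add: is_basis2_def)
  qed
  show "u \<noteq> k *s (-v)"
  proof
    assume "u = k *s (-v)" thus False using b by (simp add: is_basis2_def)
  qed
  show "v \<noteq> k *s (-u)"
  proof
    assume "v = k *s (-u)" thus False using b by (simp add: is_basis2_def)
  qed
qed

lemma basis_sym: "is_basis2 u v \<Longrightarrow> is_basis2 v u"
proof -
  assume b: "is_basis2 u v"
  have "v$1 * u$2 - v$2 * u$1 = -(u$1 * v$2 - u$2 * v$(1::2))" by (simp add: mult.commute)
  thus ?thesis using b unfolding is_basis2_def by (metis abs_minus_cancel)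
qed

lemma basis_repr:
  fixes e f w :: "int^2"
  assumes "is_basis2 e f"
  shows "\<exists>x y. w = x *s e + y *s f"
proof -
  define D where "D = e$1 * f$2 - e$2 * f$1"
  have "\<bar>D\<bar> = 1" using assms by (simp add: is_basis2_def D_def)
  hence DD: "D * D = 1" using abs_mult_self_eq[of D] by simp 
  define x where "x = D * (w$1 * f$2 - w$2 * f$1)"
  define y where "y = D * (e$1 * w$2 - e$2 * w$1)"
  have 1: "x * e$1 + y * f$1 = (D * D) * w$1" unfolding x_def y_def D_def by (simp add: algebra_simps)
  have 2: "x * e$2 + y * f$2 = (D * D) * w$2" unfolding x_def y_def D_def by (simp add: algebra_simps)
  have "w = x *s e + y *s f" using 1 2 DD by (simp add: vec_eq_iff forall_2)
  thus ?thesis by blast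
qed


lemma key_common:
  fixes x y :: int and a b c :: real
  assumes "x \<noteq> 0" "y \<noteq> 0" "0 < a" "a \<le> c"
  obtains X Y where "X \<ge> 1" "Y \<ge> 1"
    "x^2 * a + 2 * x * y * b + y^2 * c \<ge> a * X^2 + c * Y^2 - 2 * \<bar>b\<bar> * (X * Y)"
    "c * Y^2 \<ge> c + a * (Y^2 - 1)" "X * Y \<ge> 1" "X^2 + Y^2 \<ge> 2 * (X * Y)" "X^2 \<ge> 1" "Y^2 \<ge> 1"
proof -
  define X where "X = \<bar>real_of_int x\<bar>"
  define Y where "Y = \<bar>real_of_int y\<bar>"
  have "\<bar>x\<bar> \<ge> 1" using assms(1) by linarith
  hence X1: "X \<ge> 1" unfolding X_def by (metis of_int_1_le_iff of_int_abs)
  have "\<bar>y\<bar> \<ge> 1" using assms(2) by linarith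
  hence Y1: "Y \<ge> 1" unfolding Y_def by (metis of_int_1_le_iff of_int_abs)
  have xX: "(real_of_int x)^2 = X^2" unfolding X_def by simp
  have yY: "(real_of_int y)^2 = Y^2" unfolding Y_def by simp
  have ab: "\<bar>2 * real_of_int x * real_of_int y * b\<bar> = 2 * \<bar>b\<bar> * (X * Y)"
    unfolding X_def Y_def by (simp add: abs_mult)
  have "- \<bar>2 * real_of_int x * real_of_int y * b\<bar> \<le> 2 * real_of_int x * real_of_int y * b" by linarith
  hence q: "x^2 * a + 2 * x * y * b + y^2 * c \<ge> a * X^2 + c * Y^2 - 2 * \<bar>b\<bar> * (X * Y)"
    using xX yY ab by (simp add: algebra_simps)
  have Y2: "Y^2 \<ge> 1" using Y1 by (simp add: one_le_power)
  have X2: "X^2 \<ge> 1" using X1 by (simp add: one_le_power)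
  have "(c - a) * (Y^2 - 1) \<ge> 0" using assms(4) Y2 by simp
  hence h1: "c * Y^2 \<ge> c + a * (Y^2 - 1)" by (simp add: algebra_simps)
  have h2: "X * Y \<ge> 1" using X1 Y1 mult_mono[of 1 X 1 Y] by simp
  have "(X - Y)^2 \<ge> 0" by simp
  hence h3: "X^2 + Y^2 \<ge> 2 * (X * Y)" by (simp add: power2_eq_square algebra_simps)
  show ?thesis using that[OF X1 Y1 q h1 h2 h3 X2 Y2] .
qed

lemma keyi:
  fixes x y :: int and a b c :: real
  assumes "x \<noteq> 0" "y \<noteq> 0" "0 < a" "a \<le> c" "2 * \<bar>b\<bar> < a"
  shows "c < x^2 * a + 2 * x * y * b + y^2 * c"
proof -
  obtain X Y where X1: "X \<ge> 1" and Y1: "Y \<ge> 1" and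
    q: "x^2 * a + 2 * x * y * b + y^2 * c \<ge> a * X^2 + c * Y^2 - 2 * \<bar>b\<bar> * (X * Y)" and
    h1: "c * Y^2 \<ge> c + a * (Y^2 - 1)" and h2: "X * Y \<ge> 1" and h3: "X^2 + Y^2 \<ge> 2 * (X * Y)"
    using key_common[OF assms(1-4)] by blast
  have h4: "2 * \<bar>b\<bar> * (X * Y) < a * (X * Y)"
    using assms(5) h2 by (intro mult_strict_right_mono) auto
  have "a * (X^2 + Y^2 - X * Y - 1) \<ge> 0" using assms(3) h2 h3 by simp
  hence h5: "a * X^2 + a * Y^2 - a * (X * Y) - a \<ge> 0" by (simp add: algebra_simps)
  have h6: "a * (Y^2 - 1) = a * Y^2 - a" by (simp add: algebra_simps)
  show ?thesis using q h1 h4 h5 h6 by linarith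
qed

lemma keyii:
  fixes x y :: int and a b c :: real
  assumes "x \<noteq> 0" "y \<noteq> 0" "0 < a" "a \<le> c" "4 * \<bar>b\<bar> \<le> a"
  shows "c + a / 2 \<le> x^2 * a + 2 * x * y * b + y^2 * c"
proof -
  obtain X Y where X1: "X \<ge> 1" and Y1: "Y \<ge> 1" and
    q: "x^2 * a + 2 * x * y * b + y^2 * c \<ge> a * X^2 + c * Y^2 - 2 * \<bar>b\<bar> * (X * Y)" and
    h1: "c * Y^2 \<ge> c + a * (Y^2 - 1)" and h2: "X * Y \<ge> 1" and h3: "X^2 + Y^2 \<ge> 2 * (X * Y)"
    and X2: "X^2 \<ge> 1" and Y2: "Y^2 \<ge> 1"
    using key_common[OF assms(1-4)] by blast
  have h4: "2 * \<bar>b\<bar> * (X * Y) \<le> (a / 2) * (X * Y)"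
    using assms(5) h2 by (intro mult_right_mono) auto
  have "X^2 + Y^2 - (X * Y) / 2 - 1 - 1/2 \<ge> 0" using h3 X2 Y2 by simp
  hence "a * (X^2 + Y^2 - (X * Y) / 2 - 1 - 1/2) \<ge> 0" using assms(3) by simp
  hence h5: "a * X^2 + a * Y^2 - (a / 2) * (X * Y) - a - a / 2 \<ge> 0" by (simp add: algebra_simps)
  have h6: "a * (Y^2 - 1) = a * Y^2 - a" by (simp add: algebra_simps)
  show ?thesis using q h1 h4 h5 h6 by linarith
qed



lemma red_q:
  assumes "reduced_basis M e f"
  shows "is_basis2 e f" "\<And>v. v \<noteq> 0 \<Longrightarrow> Bf M e e \<le> Bf M v v"
    "\<And>v. v \<notin> range (\<lambda>k. k *s e) \<Longrightarrow> Bf M f f \<le> Bf M v v"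
  using assms by (auto simp: reduced_basis_def normM_def Bf_def)

lemma second_min:
  assumes r: "reduced_basis M e f" and r0: "reduced_basis M e0 f0"
  shows "Bf M f f \<le> Bf M f0 f0"
proof (cases "f0 \<in> range (\<lambda>k. k *s e)")
  case False thus ?thesis using red_q(3)[OF r] by blast
next
  case True
  then obtain k where k: "f0 = k *s e" by auto
  have b0: "is_basis2 e0 f0" using red_q(1)[OF r0] .
  have "e0 \<notin> range (\<lambda>k. k *s e)"
  proof
    assume "e0 \<in> range (\<lambda>k. k *s e)"
    then obtain j where "e0 = j *s e" by auto
    with k b0 show False by (simp add: is_basis2_def algebra_simps)
  qed
  hence "Bf M f f \<le> Bf M e0 e0" using red_q(3)[OF r] by blast
  also have "\<dots> \<le> Bf M f0 f0" using red_q(2)[OF r0] basis_props(2)[OF b0] by blast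
  finally show ?thesis .
qed

lemma first_min:
  assumes r: "reduced_basis M e f" and r0: "reduced_basis M e0 f0"
  shows "Bf M e e \<le> Bf M e0 e0"
  using red_q(2)[OF r] basis_props(1)[OF red_q(1)[OF r0]] by blast

lemma inv_right:
  fixes M :: "real^2^2"
  assumes "invertible M"
  shows "M ** matrix_inv M = mat 1"
proof -
  have "\<exists>A'. M ** A' = mat 1 \<and> A' ** M = mat 1" using assms unfolding invertible_def by blast
  hence "M ** matrix_inv M = mat 1 \<and> matrix_inv M ** M = mat 1"
    unfolding matrix_inv_def by (rule someI_ex)
  thus ?thesis by blast
qed

lemma int_sq_ge1: "(x::int) \<noteq> 0 \<Longrightarrow> 1 \<le> x * x"
proof -
  assume "x \<noteq> 0"
  hence "\<bar>x\<bar> \<ge> 1" by linarith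
  hence "\<bar>x\<bar> * \<bar>x\<bar> \<ge> 1" using mult_mono[of 1 "\<bar>x\<bar>" 1 "\<bar>x\<bar>"] by simp
  thus ?thesis by (simp add: abs_mult_self_eq)
qed

lemma op_bounds:
  fixes M :: "real^2^2" and e :: "int^2"
  assumes s: "M$2$1 = M$1$2" and pd: "\<And>x. x \<noteq> 0 \<Longrightarrow> x \<bullet> (M *v x) > 0"
    and d: "M$1$1 * M$2$2 - M$1$2 * M$1$2 > 0" and e: "e \<noteq> 0"
  shows "onorm (\<lambda>x. matrix_inv M *v x) * (M$1$1 * M$2$2 - M$1$2 * M$1$2) \<le> onorm (\<lambda>x. M *v x)"
    "1 \<le> Bf M e e * onorm (\<lambda>x. matrix_inv M *v x)"
    "1 \<le> onorm (\<lambda>x. M *v x) * onorm (\<lambda>x. matrix_inv M *v x)"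
proof -
  define K where "K = onorm (\<lambda>x. M *v x)"
  define N where "N = onorm (\<lambda>x. matrix_inv M *v x)"
  define dd where "dd = M$1$1 * M$2$2 - M$1$2 * M$1$2"
  have K0: "K \<ge> 0" unfolding K_def by (rule onorm_pos_le) simp
  have N0: "N \<ge> 0" unfolding N_def by (rule onorm_pos_le) simp
  have Kb: "\<And>x. norm (M *v x) \<le> K * norm x" unfolding K_def by (rule onorm) simp
  have Nb: "\<And>x. norm (matrix_inv M *v x) \<le> N * norm x" unfolding N_def by (rule onorm) simp
  have "det M = dd" unfolding det_2 dd_def using s by simp
  hence "invertible M" using d invertible_det_nz unfolding dd_def by fastforce
  hence MM: "\<And>x. M *v (matrix_inv M *v x) = x"
    using inv_right by (simp add: matrix_vector_mul_assoc)
  have NB: "norm (matrix_inv M *v x) * dd \<le> K * norm x" for x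
  proof -
    define z where "z = matrix_inv M *v x"
    have x: "x = M *v z" using MM unfolding z_def by simp
    define R :: "real^2" where "R = (\<chi> i. if i = 1 then - (x$2) else x$1)"
    have R1: "R$1 = - (x$2)" "R$2 = x$1" unfolding R_def by simp_all
    have x1: "x$1 = M$1$1 * z$1 + M$1$2 * z$2" and x2: "x$2 = M$2$1 * z$1 + M$2$2 * z$2"
      using x by (simp_all add: matrix_vector_mult_def sum_2)
    have "(M *v R)$1 = - dd * z$2"
      unfolding dd_def by (simp add: matrix_vector_mult_def sum_2 R1 x1 x2 s algebra_simps)
    moreover have "(M *v R)$2 = dd * z$1"
      unfolding dd_def by (simp add: matrix_vector_mult_def sum_2 R1 x1 x2 s algebra_simps)
    ultimately have "norm (M *v R) = sqrt (dd^2 * ((z$1)^2 + (z$2)^2))"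
      unfolding norm2 by (simp add: power_mult_distrib algebra_simps)
    also have "\<dots> = dd * norm z" unfolding norm2 using d dd_def by (simp add: real_sqrt_mult)
    finally have "dd * norm z = norm (M *v R)" by simp
    also have "\<dots> \<le> K * norm R" by (rule Kb)
    also have "norm R = norm x" unfolding norm2 R1 by simp
    finally show ?thesis unfolding z_def by (simp add: mult.commute)
  qed
  have ddp: "dd > 0" using d dd_def by simp
  have "N \<le> K / dd" unfolding N_def
    by (rule onorm_le) (use NB ddp in \<open>simp add: field_simps\<close>)
  thus "onorm (\<lambda>x. matrix_inv M *v x) * (M$1$1 * M$2$2 - M$1$2 * M$1$2) \<le> onorm (\<lambda>x. M *v x)"
    using ddp unfolding N_def K_def dd_def by (simp add: field_simps)
  define x where "x = rv e"
  have x0: "x \<noteq> 0" using e rv_eq0 x_def by simp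
  have xn: "norm x > 0" using x0 by simp
  have "norm x = norm (M *v (matrix_inv M *v x))" using MM by simp
  also have "\<dots> \<le> K * norm (matrix_inv M *v x)" by (rule Kb)
  also have "\<dots> \<le> K * (N * norm x)" using Nb K0 by (simp add: mult_left_mono)
  finally have "1 * norm x \<le> (K * N) * norm x" by (simp add: algebra_simps)
  thus "1 \<le> onorm (\<lambda>x. M *v x) * onorm (\<lambda>x. matrix_inv M *v x)"
    using xn unfolding K_def N_def by (meson mult_le_cancel_right_pos)
  define z where "z = matrix_inv M *v x"
  have Mz: "M *v z = x" using MM z_def by simp
  have z0: "z \<noteq> 0" using x0 Mz by auto
  have "(x \<bullet> (M *v z))^2 \<le> (x \<bullet> (M *v x)) * (z \<bullet> (M *v z))" by (rule CS[OF s pd z0])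
  hence c1: "(x \<bullet> x)^2 \<le> Bf M e e * (z \<bullet> x)" unfolding Mz by (simp add: Bf_def x_def)
  have "z \<bullet> x \<le> norm z * norm x" by (rule norm_cauchy_schwarz)
  also have "\<dots> \<le> (N * norm x) * norm x" using Nb z_def by (simp add: mult_right_mono)
  also have "\<dots> = N * (x \<bullet> x)" by (simp add: dot_square_norm power2_eq_square)
  finally have c2: "z \<bullet> x \<le> N * (x \<bullet> x)" .
  have a0: "Bf M e e \<ge> 0" using pd x0 unfolding Bf_def x_def by (simp add: less_imp_le)
  have "(x \<bullet> x)^2 \<le> Bf M e e * (N * (x \<bullet> x))" using c1 c2 a0 mult_left_mono order_trans by blast
  hence c3: "(x \<bullet> x) * (x \<bullet> x) \<le> (Bf M e e * N) * (x \<bullet> x)" by (simp add: power2_eq_square algebra_simps)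
  have "x \<bullet> x = real_of_int (e$1 * e$1 + e$2 * e$2)" unfolding x_def by (simp add: rv_def inner_vec_def sum_2)
  moreover have "e$1 \<noteq> 0 \<or> e$2 \<noteq> 0" using e by (auto simp: vec_eq_iff forall_2)
  hence "e$1 * e$1 + e$2 * e$2 \<ge> 1" using int_sq_ge1[of "e$1"] int_sq_ge1[of "e$2"]
    by (auto intro: add_increasing add_increasing2)
  hence "real_of_int (e$1 * e$1 + e$2 * e$2) \<ge> 1" by (simp only: of_int_1_le_iff)
  ultimately have xx: "x \<bullet> x \<ge> 1" by linarith
  from c3 xx have "x \<bullet> x \<le> Bf M e e * N" by (meson mult_le_cancel_right_pos less_le_trans zero_less_one)
  with xx show "1 \<le> Bf M e e * onorm (\<lambda>x. matrix_inv M *v x)" unfolding N_def by linarith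
qed



lemma int_small: "(k::int) \<noteq> 0 \<Longrightarrow> k * k < 4 \<Longrightarrow> k = 1 \<or> k = -1"
proof (rule ccontr)
  assume k: "k \<noteq> 0" "k * k < 4" "\<not> (k = 1 \<or> k = -1)"
  hence "\<bar>k\<bar> \<ge> 2" by linarith
  hence "\<bar>k\<bar> * \<bar>k\<bar> \<ge> 2 * 2" using mult_mono[of 2 "\<bar>k\<bar>" 2 "\<bar>k\<bar>"] by simp
  thus False using k(2) by (simp add: abs_mult_self_eq)
qed

lemma smul_neg: "k *s (- u) = (-k) *s (u::int^2)"
  by (simp add: vec_eq_iff)

lemma unit_mult:
  fixes T a :: real and k :: int
  assumes "k \<noteq> 0" "a > 0" "T < 4" "k^2 * a \<le> T * a"
  shows "k = 1 \<or> k = -1"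
proof -
  have "real_of_int (k * k) * a < 4 * a" using assms by (simp add: power2_eq_square)
  hence "real_of_int (k * k) < 4" using assms(2) by simp
  hence "k * k < 4" by linarith
  thus ?thesis using int_small assms(1) by blast
qed

lemma nr1: "is_basis2 u v \<Longrightarrow> w = u \<or> w = -u \<Longrightarrow> v \<notin> range (\<lambda>k. k *s w)"
  using basis_props(4,6) by blast

lemma nr2: "is_basis2 u v \<Longrightarrow> w = v \<or> w = -v \<Longrightarrow> u \<notin> range (\<lambda>k. k *s w)"
  using basis_props(3,5) by blast

theorem mainTheorem14:
  fixes M M' :: "real^2^2" and e f e' f' :: "int^2" and \<tau> :: real
  assumes "spd2 M" and "spd2 M'"
    and "reduced_basis M e f" and "reduced_basis M' e' f'"
    and "\<tau> \<ge> 1"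
    and "loewner_le ((1 / \<tau>^2) *\<^sub>R M) M'" and "loewner_le M' (\<tau>^2 *\<^sub>R M)"
    and "(2 * mu M < (lambda1 M)^2 \<and> \<tau> = 1) \<or>
         (4 * mu M \<le> (lambda1 M)^2 \<and> \<tau>^4 \<le> 1 + (1/3) * (kappa M) powr (-2))"
  shows "{e', f'} \<subseteq> {e, f, -e, -f}"
proof -
  have sM: "M$2$1 = M$1$2" using assms(1) sym12 unfolding spd2_def by blast
  have pdM: "\<And>x. x \<noteq> 0 \<Longrightarrow> x \<bullet> (M *v x) > 0" using assms(1) unfolding spd2_def by blast
  have posq: "\<And>v. v \<noteq> 0 \<Longrightarrow> Bf M v v > 0" using pdM rv_eq0 unfolding Bf_def by blast
  have be: "is_basis2 e f" using red_q(1)[OF assms(3)] .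
  have be': "is_basis2 e' f'" using red_q(1)[OF assms(4)] .
  define a where "a = Bf M e e"
  define b where "b = Bf M e f"
  define c where "c = Bf M f f"
  define dd where "dd = M$1$1 * M$2$2 - M$1$2 * M$1$2"
  have a0: "a > 0" unfolding a_def using posq basis_props(1)[OF be] by blast
  have ac: "a \<le> c" unfolding a_def c_def using red_q(2)[OF assms(3)] basis_props(2)[OF be] by blast
  have quad: "\<And>x y. Bf M (x *s e + y *s f) (x *s e + y *s f) = x^2 * a + 2 * x * y * b + y^2 * c"
    unfolding a_def b_def c_def by (rule Bf_quad[OF sM])
  have gram_gen: "\<And>u w. is_basis2 u w \<Longrightarrow> Bf M u u * Bf M w w - (Bf M u w)^2 = dd"
  proof -
    fix u w :: "int^2" assume bw: "is_basis2 u w"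
    define D where "D = u$1 * w$2 - u$2 * w$1"
    have "\<bar>D\<bar> = 1" using bw by (simp add: is_basis2_def D_def)
    hence "D * D = 1" using abs_mult_self_eq[of D] by simp
    hence D1: "(real_of_int (u$1) * real_of_int (w$2) - real_of_int (u$2) * real_of_int (w$1))^2 = 1"
      unfolding D_def by (simp add: power2_eq_square flip: of_int_mult of_int_diff)
    show "Bf M u u * Bf M w w - (Bf M u w)^2 = dd" using gram[OF sM, of u w] D1 dd_def by simp
  qed
  have gr: "a * c - b^2 = dd" unfolding a_def b_def c_def using gram_gen[OF be] .
  have rb0: "reduced_basis M (fst (some_rb M)) (snd (some_rb M))"
    unfolding some_rb_def using someI[of "\<lambda>p. reduced_basis M (fst p) (snd p)" "(e, f)"] assms(3) by simp
  define e0 where "e0 = fst (some_rb M)"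
  define f0 where "f0 = snd (some_rb M)"
  have rb0': "reduced_basis M e0 f0" using rb0 e0_def f0_def by simp
  have ea: "Bf M e0 e0 = a" unfolding a_def using first_min[OF assms(3) rb0'] first_min[OF rb0' assms(3)] by simp
  have fc: "Bf M f0 f0 = c" unfolding c_def using second_min[OF assms(3) rb0'] second_min[OF rb0' assms(3)] by simp
  have "a * c - (Bf M e0 f0)^2 = dd" using gram_gen[OF red_q(1)[OF rb0']] ea fc by simp
  hence "(Bf M e0 f0)^2 = b^2" using gr by simp
  hence mub: "mu M = \<bar>b\<bar>" unfolding mu_def e0_def f0_def Bf_def by (metis power2_eq_iff abs_minus_cancel)
  have lam: "(lambda1 M)^2 = a" unfolding lambda1_def normM_def using ea a0 unfolding e0_def Bf_def by simp
  have hyp: "(2 * \<bar>b\<bar> < a \<and> \<tau> = 1) \<or> (4 * \<bar>b\<bar> \<le> a \<and> \<tau>^4 \<le> 1 + (1/3) * (kappa M) powr (-2))"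
    using assms(8) unfolding mub lam .
  have t2: "\<tau>^2 > 0" using assms(5) by simp
  have rel1: "Bf M v v \<le> \<tau>^2 * Bf M' v v" for v
  proof -
    have "(1 / \<tau>^2) * Bf M v v \<le> Bf M' v v"
      using assms(6) unfolding loewner_le_def Bf_def by (metis Br_scale)
    thus ?thesis using t2 by (simp add: field_simps)
  qed
  have rel2: "Bf M' v v \<le> \<tau>^2 * Bf M v v" for v
    using assms(7) unfolding loewner_le_def Bf_def by (metis Br_scale)
  define T where "T = \<tau>^2 * \<tau>^2"
  have c0: "c > 0" using a0 ac by simp
  have key: "T < 4 \<and> (\<forall>x y. x \<noteq> 0 \<longrightarrow> y \<noteq> 0 \<longrightarrow> T * c < Bf M (x *s e + y *s f) (x *s e + y *s f))"
  proof (cases "2 * \<bar>b\<bar> < a \<and> \<tau> = 1")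
    case True
    hence T1: "T = 1" unfolding T_def by simp
    have "T * c < Bf M (x *s e + y *s f) (x *s e + y *s f)" if "x \<noteq> 0" "y \<noteq> 0" for x y
    proof -
      have "c < x^2 * a + 2 * x * y * b + y^2 * c" using keyi[OF that a0 ac] True by blast
      thus ?thesis using quad[of x y] T1 by simp
    qed
    thus ?thesis using T1 by simp
  next
    case False
    hence h4: "4 * \<bar>b\<bar> \<le> a" and ht: "\<tau>^4 \<le> 1 + (1/3) * (kappa M) powr (-2)" using hyp by auto
    have "(4 * \<bar>b\<bar>)^2 \<le> a^2" using h4 by (intro power_mono) auto
    hence bb: "16 * b^2 \<le> a^2" by (simp add: power_mult_distrib)
    have "a * a \<le> a * c" using ac a0 by (simp add: mult_left_mono)
    moreover have "a * a > 0" using a0 by simp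
    ultimately have ddp: "dd > 0" using gr bb unfolding power2_eq_square by linarith
    define K where "K = onorm (\<lambda>x. M *v x)"
    define N where "N = onorm (\<lambda>x. matrix_inv M *v x)"
    have d': "M$1$1 * M$2$2 - M$1$2 * M$1$2 > 0" using ddp dd_def by simp
    note ob = op_bounds[OF sM pdM d' basis_props(1)[OF be]]
    have NK: "N * dd \<le> K" using ob(1) unfolding N_def K_def dd_def .
    have aN: "1 \<le> a * N" using ob(2) unfolding N_def a_def .
    have KN: "1 \<le> K * N" using ob(3) unfolding N_def K_def .
    have K0: "K \<ge> 0" unfolding K_def by (rule onorm_pos_le) simp
    have KNp: "K * N > 0" using KN by simp
    have "kappa M = sqrt (K * N)" unfolding kappa_def K_def N_def ..
    moreover have "sqrt (K * N) powr 2 = sqrt (K * N) ^ 2" using KNp by (intro powr_numeral) simp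
    ultimately have "kappa M powr (-2) = inverse (sqrt (K * N) ^ 2)" by (simp add: powr_minus)
    hence kap: "kappa M powr (-2) = 1 / (K * N)" using KNp by (simp add: divide_inverse)
    have TT: "T = \<tau>^4" unfolding T_def by (simp add: power_add[symmetric])
    have Tm: "T - 1 \<le> 1 / (3 * (K * N))" using ht kap TT by simp
    have "dd = dd * 1" by simp
    also have "\<dots> \<le> dd * (a * N)" using aN ddp by (intro mult_left_mono) auto
    also have "\<dots> = a * (N * dd)" by (simp add: algebra_simps)
    also have "\<dots> \<le> a * K" using NK a0 by (intro mult_left_mono) auto
    finally have ddK: "dd \<le> a * K" .
    have "a * c \<le> a * K + a * (a / 16)" using gr ddK bb by (simp add: power2_eq_square)
    hence "a * c \<le> a * (K + a / 16)" by (simp add: distrib_left)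
    hence cK: "c \<le> K + a / 16" using a0 by (simp only: mult_le_cancel_left_pos)
    have "K * 1 \<le> K * (a * N)" using aN K0 by (intro mult_left_mono) auto
    moreover have "a * 1 \<le> a * (K * N)" using KN a0 by (intro mult_left_mono) auto
    ultimately have c17: "c \<le> (17 / 16) * (a * (K * N))" using cK by (simp add: algebra_simps)
    have "(T - 1) * c \<le> (1 / (3 * (K * N))) * c" using Tm c0 by (intro mult_right_mono) auto
    also have "\<dots> \<le> (1 / (3 * (K * N))) * ((17 / 16) * (a * (K * N)))" using c17 KNp by (intro mult_left_mono) auto
    also have "\<dots> = (17 / 48) * a"
    proof -
      have "K \<noteq> 0" "N \<noteq> 0" using KNp by auto
      thus ?thesis by (simp add: field_simps)
    qed
    finally have Tc: "T * c \<le> c + (17 / 48) * a" by (simp add: algebra_simps)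
    have "T * c < Bf M (x *s e + y *s f) (x *s e + y *s f)" if "x \<noteq> 0" "y \<noteq> 0" for x y
    proof -
      have "c + a / 2 \<le> x^2 * a + 2 * x * y * b + y^2 * c" using keyii[OF that a0 ac h4] .
      thus ?thesis using quad[of x y] Tc a0 by simp
    qed
    moreover have "T < 4"
    proof -
      have "1 / (3 * (K * N)) \<le> 1 / 3" using KN by (simp add: field_simps)
      thus ?thesis using Tm by simp
    qed
    ultimately show ?thesis by blast
  qed
  have T4: "T < 4" using key by blast
  have T1: "T \<ge> 1" unfolding T_def using assms(5) by (metis one_le_power mult_mono one_le_numeral dual_order.trans less_imp_le zero_le_one power2_eq_square) 
  have small: "v \<in> range (\<lambda>k. k *s e) \<or> v \<in> range (\<lambda>k. k *s f)" if "Bf M v v \<le> T * c" for v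
  proof -
    obtain x y where v: "v = x *s e + y *s f" using basis_repr[OF be] by blast
    have "\<not> (x \<noteq> 0 \<and> y \<noteq> 0)" using key that v by force
    hence "x = 0 \<or> y = 0" by blast
    thus ?thesis using v by auto
  qed
  have unitE: "v = e \<or> v = -e" if "v = k *s e" "v \<noteq> 0" "Bf M v v \<le> T * a" for v k
  proof -
    have k0: "k \<noteq> 0" using that by auto
    have "Bf M v v = k^2 * a" using quad[of k 0] that(1) by simp
    hence "k = 1 \<or> k = -1" using unit_mult[OF k0 a0 T4] that(3) by simp
    thus ?thesis using that(1) by (auto simp: vec_eq_iff)
  qed
  have unitF: "v = f \<or> v = -f" if "v = k *s f" "v \<noteq> 0" "Bf M v v \<le> T * c" for v k
  proof -
    have k0: "k \<noteq> 0" using that by auto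
    have "Bf M v v = k^2 * c" using quad[of 0 k] that(1) by simp
    hence "k = 1 \<or> k = -1" using unit_mult[OF k0 c0 T4] that(3) by simp
    thus ?thesis using that(1) by (auto simp: vec_eq_iff)
  qed
  have chain: "Bf M v v \<le> T * Bf M w w" if "Bf M' v v \<le> Bf M' w w" for v w
  proof -
    have "Bf M v v \<le> \<tau>^2 * Bf M' v v" by (rule rel1)
    also have "\<dots> \<le> \<tau>^2 * Bf M' w w" using that t2 by simp
    also have "\<dots> \<le> \<tau>^2 * (\<tau>^2 * Bf M w w)" by (rule mult_left_mono[OF rel2 less_imp_le[OF t2]])
    finally show ?thesis unfolding T_def by (simp add: algebra_simps)
  qed
  have Tac: "T * a \<le> T * c" using ac T1 by simp
  have qe': "Bf M e' e' \<le> T * a" unfolding a_def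
    by (rule chain) (use red_q(2)[OF assms(4)] basis_props(1)[OF be] in blast)
  have e'0: "e' \<noteq> 0" using basis_props(1)[OF be'] .
  have f'0: "f' \<noteq> 0" using basis_props(2)[OF be'] .
  have E: "e' = e \<or> e' = -e \<or> e' = f \<or> e' = -f"
    using small[of e'] qe' Tac unitE[of e'] unitF[of e'] e'0 by force
  have F: "f' = e \<or> f' = -e \<or> f' = f \<or> f' = -f"
  proof (cases "e' = e \<or> e' = -e")
    case True
    have "f \<notin> range (\<lambda>k. k *s e')" using nr1[OF be True] .
    hence "Bf M f' f' \<le> T * c" unfolding c_def by (intro chain) (use red_q(3)[OF assms(4)] in blast)
    moreover have "f' \<notin> range (\<lambda>k. k *s e)"
    proof
      assume "f' \<in> range (\<lambda>k. k *s e)"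
      then obtain k where k: "f' = k *s e" by auto
      show False using True
      proof
        assume "e' = e" thus False using k basis_props(4)[OF be', of k] by simp
      next
        assume "e' = -e" thus False using k basis_props(4)[OF be', of "-k"] by (simp add: smul_neg vec_eq_iff)
      qed
    qed
    ultimately show ?thesis using small[of f'] unitF[of f'] f'0 by force
  next
    case False
    hence Ef: "e' = f \<or> e' = -f" using E by blast
    have "e \<notin> range (\<lambda>k. k *s e')" using nr2[OF be Ef] .
    hence q: "Bf M f' f' \<le> T * a" unfolding a_def by (intro chain) (use red_q(3)[OF assms(4)] in blast)
    moreover have "f' \<notin> range (\<lambda>k. k *s f)"
    proof
      assume "f' \<in> range (\<lambda>k. k *s f)"
      then obtain k where k: "f' = k *s f" by auto
      show False using Ef
      proof
        assume "e' = f" thus False using k basis_props(4)[OF be', of k] by simp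
      next
        assume "e' = -f" thus False using k basis_props(4)[OF be', of "-k"] by (simp add: smul_neg vec_eq_iff)
      qed
    qed
    ultimately show ?thesis using small[of f'] unitE[of f'] f'0 Tac by force
  qed
  show ?thesis using E F by blast
qed

end
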